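(* Let the setting described in the context hold, and assume conditions (A)(i)–(iii) and (P), with $L_F^2\eta_k<1-\eta_F$ for every $k\ge1$. Let $k\ge1$ be such that the iterate satisfies $x_k^\delta\in\mathcal{B}_\rho(x^\dagger)$, and write $e_k^\delta=x_k^\delta-x^\dagger$. Define \[ c_k^\delta=2\eta_k\lambda_k^\delta\max(1,L_G^2)\big(\tfrac32+2\eta_k\lambda_k^\delta L_G^2\big), \qquad d_k=\frac{(1+\eta_F)^2}{2(1-L_F^2\eta_k-\eta_F)}\eta_k . \] Then \[ \|e_{k+1}^\delta\|^2\le(1+nc_k^\delta)\|e_k^\delta\|^2+nc_k^\delta(C_{max}+\delta)^2+nd_k\delta^2, \] and \begin{align*} \mathbb{E}[\|e_{k+1}^\delta\|^2]\le{}&(1+c_k^\delta)\mathbb{E}[\|e_k^\delta\|^2]+c_k^\delta(C_{max}+\delta)^2+2(1+\eta_F)\eta_k\delta\,\mathbb{E}[\|F(x_k^\delta)-y^\delta\|^2]^{1/2}\\ &-2(1-L_F^2\eta_k-\eta_F)\eta_k\,\mathbb{E}[\|F(x_k^\delta)-y^\delta\|^2]\\ \le{}&(1+c_k^\delta)\mathbb{E}[\|e_k^\delta\|^2]+c_k^\delta(C_{max}+\delta)^2+d_k\delta^2 . \end{align*}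
   Context: Setting. $X,Y$ are real Hilbert spaces and $n\ge1$. $Y^n$ is the product Hilbert space with $\|(z_i)\|^2=\sum_i\|z_i\|^2$. For $i=1,\dots,n$, $F_i:\mathcal{D}(F_i)\subset X\to Y$ and $G_i:X\to Y$ are nonlinear, $F(x)=n^{-1/2}(F_1(x),\dots,F_n(x))$ and $G(x)=n^{-1/2}(G_1(x),\dots,G_n(x))$. Data. $y^\dagger=n^{-1/2}(y_1^\dagger,\dots,y_n^\dagger)$ are the exact data and $y^\delta=n^{-1/2}(y_1^\delta,\dots,y_n^\delta)$ the noisy data, with $\|y^\delta-y^\dagger\|\le\delta$. Reference solution. $x_1$ is a deterministic initial guess, and $x^\dagger$ is the solution of $F(x)=y^\dagger$ of minimal distance to $x_1$. Algorithm. $x_1^\delta=x_1$, and \[ x_{k+1}^\delta=x_k^\delta-\eta_k\big(F_{i_k}'(x_k^\delta)^*(F_{i_k}(x_k^\delta)-y^\delta_{i_k})+\lambda_k^\delta G_{i_k}'(x_k^\delta)^*(G_{i_k}(x_k^\delta)-y^\delta_{i_k})\big), \] with $i_k$ drawn uniformly and independently from $\{1,\dots,n\}$, $\eta_k>0$ and $\lambda_k^\delta>0$. $\mathbb{E}$ is expectation over the random indices. (A) There is a closed ball $\mathcal{B}_\rho(x^\dagger)\subset\bigcap_i\mathcal{D}(F_i)$, $\rho\ge\|x_1-x^\dagger\|$ sufficiently large, on which the following hold. (i) $F_i$ and $G_i$ have continuous Fréchet derivatives with $\max_i\sup\|F_i'\|\le L_F$ and $\max_i\sup\|G_i'\|\le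 L_G$. (ii) There is $\eta_F\in[0,1)$ with $\|F_i(x)-F_i(\tilde x)-F_i'(\tilde x)(x-\tilde x)\|\le\eta_F\|F_i(x)-F_i(\tilde x)\|$ for all $i$ and $x,\tilde x\in\mathcal{B}_\rho(x^\dagger)$. (iii) $C_{min}\le\|G(x^* )-y^\dagger\|\le C_{max}$ for every solution $x^*\in\mathcal{B}_\rho(x^\dagger)$ of $F(x)=y^\dagger$, with constants $0<C_{min}\le C_{max}$. (P) $L_F^2\eta_k<1$, $\sum_k\eta_k=\infty$, and $\sum_k\eta_k\lambda_k^\delta<\infty$. *)

theory Defs
  imports "HOL-Analysis.Analysis" "HOL-Probability.Probability"
begin

text \<open>Norm in the scaled product space Y^n of the stacked vector
  n^(-1/2) (z_1,...,z_n): sqrt ((1/n) * sum_i norm (z_i)^2).\<close>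
definition stack_norm :: "nat \<Rightarrow> (nat \<Rightarrow> 'y::real_normed_vector) \<Rightarrow> real" where
  "stack_norm n z = sqrt ((1 / real n) * (\<Sum>i=1..n. (norm (z i))\<^sup>2))"

text \<open>Indices are 1-based: iterate k (k >= 1)
  is sgd_iter ... xi k, with sgd_iter ... xi 1 = x1 and
  x_{k+1} = x_k - eta_k (F_{i_k}'(x_k)^* (F_{i_k}(x_k) - y_{i_k})
                      + lambda_k G_{i_k}'(x_k)^* (G_{i_k}(x_k) - y_{i_k})),  i_k = xi k.
  The value at index 0 is a dummy (equal to x1).\<close>
fun sgd_iter ::
  "(nat \<Rightarrow> 'x::real_inner \<Rightarrow> 'y::real_inner) \<Rightarrow> (nat \<Rightarrow> 'x \<Rightarrow> ('x \<Rightarrow>\<^sub>L 'y)) \<Rightarrow>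
   (nat \<Rightarrow> 'x \<Rightarrow> 'y) \<Rightarrow> (nat \<Rightarrow> 'x \<Rightarrow> ('x \<Rightarrow>\<^sub>L 'y)) \<Rightarrow> (nat \<Rightarrow> 'y) \<Rightarrow>
   (nat \<Rightarrow> real) \<Rightarrow> (nat \<Rightarrow> real) \<Rightarrow> 'x \<Rightarrow> (nat \<Rightarrow> nat) \<Rightarrow> nat \<Rightarrow> 'x" where
  "sgd_iter F F' G G' y eta lam x1 xi 0 = x1"
| "sgd_iter F F' G G' y eta lam x1 xi (Suc k) =
     (if k = 0 then x1 else
      (let x = sgd_iter F F' G G' y eta lam x1 xi k; i = xi k in
       x - eta k *\<^sub>R (adjoint (blinfun_apply (F' i x)) (F i x - y i)
                     + lam k *\<^sub>R adjoint (blinfun_apply (G' i x)) (G i x - y i))))"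

definition index_law :: "nat \<Rightarrow> nat \<Rightarrow> (nat \<Rightarrow> nat) pmf" where
  "index_law n k = Pi_pmf {1..k} 1 (\<lambda>_. pmf_of_set {1..n})"

end

theory Submission
  imports Defs
begin


lemma riesz_aux:
  fixes \<phi> :: "'a::{real_inner,complete_space} \<Rightarrow> real"
  assumes bl: "bounded_linear \<phi>"
  shows "\<exists>z. \<forall>v. \<phi> v = v \<bullet> z"
proof -
  interpret bounded_linear \<phi> by fact
  obtain K where K: "\<And>x. norm (\<phi> x) \<le> norm x * K" and Kpos: "K > 0" using pos_bounded by blast
  define S where "S = \<phi> ` cball 0 1"
  define m where "m = Sup S"
  have bdd: "bdd_above S" unfolding S_def bdd_above_def
  proof (rule exI[of _ K], safe)
    fix x :: 'a assume "x \<in> cball 0 1"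
    then have "norm x \<le> 1" by simp
    then have "norm x * K \<le> K" using Kpos by (simp add: mult_le_cancel_right1)
    then show "\<phi> x \<le> K" using K[of x] by simp
  qed
  have ne: "S \<noteq> {}" by (auto simp: S_def)
  have leS: "\<phi> u \<le> m" if "norm u \<le> 1" for u
    unfolding m_def using that bdd by (intro cSup_upper) (auto simp: S_def)
  have m0: "m \<ge> 0" using leS[of 0] by (simp add: zero)
  have le_m: "\<phi> w \<le> m * norm w" for w
  proof (cases "w = 0")
    case True then show ?thesis by (simp add: zero)
  next
    case False
    then have "\<phi> (w /\<^sub>R norm w) \<le> m" by (intro leS) simp
    then show ?thesis using False by (simp add: scale field_simps)
  qed
  show ?thesis
  proof (cases "m = 0")
    case True
    have "\<phi> v = 0" for v using le_m[of v] le_m[of "-v"] True by (simp add: neg)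
    then show ?thesis by (intro exI[of _ 0]) simp
  next
    case False
    then have mpos: "m > 0" using m0 by simp
    have "\<exists>u. norm u \<le> 1 \<and> m - 1 / real (Suc j) < \<phi> u" for j
    proof -
      have "m - 1 / real (Suc j) < Sup S" using m_def by simp
      then obtain s where "s \<in> S" "m - 1 / real (Suc j) < s" using less_cSup_iff[OF ne bdd] by blast
      then show ?thesis by (auto simp: S_def)
    qed
    then obtain u where u1: "\<And>j. norm (u j) \<le> 1" and u2: "\<And>j. m - 1 / real (Suc j) < \<phi> (u j)"
      by metis
    define \<epsilon> where "\<epsilon> j = 1 / (m * real (Suc j))" for j
    have epos: "\<epsilon> j > 0" for j using mpos by (simp add: \<epsilon>_def)
    have key: "(norm (u i - u j))\<^sup>2 \<le> 4 * (\<epsilon> i + \<epsilon> j)" for i j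
    proof -
      have par: "(norm (u i - u j))\<^sup>2 = 2 * (norm (u i))\<^sup>2 + 2 * (norm (u j))\<^sup>2 - (norm (u i + u j))\<^sup>2"
        by (simp add: power2_norm_eq_inner inner_diff_left inner_diff_right inner_add_left inner_add_right inner_commute)
      have b: "2 * (norm (u i))\<^sup>2 + 2 * (norm (u j))\<^sup>2 \<le> 4"
      proof -
        have "(norm (u i))\<^sup>2 \<le> 1" by (rule power_le_one) (use u1[of i] in auto)
        moreover have "(norm (u j))\<^sup>2 \<le> 1" by (rule power_le_one) (use u1[of j] in auto)
        ultimately show ?thesis by linarith
      qed
      have lo: "m * (2 - (\<epsilon> i + \<epsilon> j)) < m * norm (u i + u j)"
      proof -
        have "m * (2 - (\<epsilon> i + \<epsilon> j)) = (m - 1 / real (Suc i)) + (m - 1 / real (Suc j))"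
        proof -
          have "m * \<epsilon> i = 1 / real (Suc i)" "m * \<epsilon> j = 1 / real (Suc j)"
            using mpos by (auto simp: \<epsilon>_def)
          then show ?thesis by (simp add: algebra_simps)
        qed
        also have "\<dots> < \<phi> (u i) + \<phi> (u j)" using u2[of i] u2[of j] by simp
        also have "\<dots> = \<phi> (u i + u j)" by (simp add: add)
        also have "\<dots> \<le> m * norm (u i + u j)" by (rule le_m)
        finally show ?thesis .
      qed
      then have lo': "2 - (\<epsilon> i + \<epsilon> j) < norm (u i + u j)" using mpos by simp
      show ?thesis
      proof (cases "\<epsilon> i + \<epsilon> j \<ge> 1")
        case True
        then have "4 \<le> 4 * (\<epsilon> i + \<epsilon> j)" by simp
        moreover have "(norm (u i - u j))\<^sup>2 \<le> 4" using par b zero_le_power2[of "norm (u i + u j)"] by linarith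
        ultimately show ?thesis by linarith
      next
        case False
        then have "(2 - (\<epsilon> i + \<epsilon> j))\<^sup>2 \<le> (norm (u i + u j))\<^sup>2"
          using lo' by (intro power_mono) auto
        then show ?thesis using par b epos[of i] epos[of j]
        proof -
          have "(2 - (\<epsilon> i + \<epsilon> j))\<^sup>2 = 4 - 4 * (\<epsilon> i + \<epsilon> j) + (\<epsilon> i + \<epsilon> j)\<^sup>2"
            by (simp add: power2_eq_square algebra_simps)
          then show ?thesis using par b \<open>(2 - (\<epsilon> i + \<epsilon> j))\<^sup>2 \<le> (norm (u i + u j))\<^sup>2\<close>
            zero_le_power2[of "\<epsilon> i + \<epsilon> j"] by linarith
        qed
      qed
    qed
    have cau: "Cauchy u"
    proof (rule CauchyI)
      fix e :: real assume e: "e > 0"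
      obtain N0 where N0: "8 / (m * e\<^sup>2) < real N0"
        using reals_Archimedean2 by blast
      define N where "N = N0"
      have N: "8 / (m * e\<^sup>2) < real (Suc N)" using N0 by (simp add: N_def)
      show "\<exists>M. \<forall>a\<ge>M. \<forall>b\<ge>M. norm (u a - u b) < e"
      proof (intro exI allI impI)
        fix a b assume a: "a \<ge> N" and b: "b \<ge> N"
        have "\<epsilon> a \<le> \<epsilon> N" "\<epsilon> b \<le> \<epsilon> N" using a b mpos
          by (auto simp: \<epsilon>_def intro!: divide_left_mono mult_left_mono)
        have "\<epsilon> N < e\<^sup>2 / 8"
        proof -
          have "8 < real (Suc N) * (m * e\<^sup>2)" using N mpos e by (simp add: field_simps)
          have pos: "m * real (Suc N) > 0" using mpos by simp
          have "1 < e\<^sup>2 / 8 * (m * real (Suc N))" using \<open>8 < real (Suc N) * (m * e\<^sup>2)\<close>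
            by (simp add: algebra_simps)
          then have "1 / (m * real (Suc N)) < e\<^sup>2 / 8" using pos_divide_less_eq[OF pos, of 1 "e\<^sup>2 / 8"] by blast
          then show ?thesis unfolding \<epsilon>_def .
        qed
        then have "(norm (u a - u b))\<^sup>2 < e\<^sup>2"
          using key[of a b] \<open>\<epsilon> a \<le> \<epsilon> N\<close> \<open>\<epsilon> b \<le> \<epsilon> N\<close> by argo
        then show "norm (u a - u b) < e" using e by (meson abs_le_square_iff less_le_not_le norm_ge_zero power2_less_imp_less)
      qed
    qed
    then obtain w where w: "u \<longlonglongrightarrow> w" using Cauchy_convergent_iff convergent_def by blast
    have nw: "norm w \<le> 1"
      using tendsto_norm[OF w] u1 by (intro LIMSEQ_le_const2) auto
    have phw: "(\<lambda>j. \<phi> (u j)) \<longlonglongrightarrow> \<phi> w" by (rule tendsto[OF w])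
    have "(\<lambda>j. m - inverse (real (Suc j))) \<longlonglongrightarrow> m - 0"
      by (intro tendsto_diff tendsto_const LIMSEQ_inverse_real_of_nat)
    then have "m \<le> \<phi> w" using phw u2 by (intro LIMSEQ_le[where X="\<lambda>j. m - inverse (real (Suc j))"]) (auto simp: inverse_eq_divide less_imp_le)
    then have pw: "\<phi> w = m" using leS[OF nw] by simp
    have "m \<le> m * norm w" using le_m[of w] pw by simp
    then have nw1: "norm w = 1" using nw mpos by simp
    have ww: "w \<bullet> w = 1" using nw1 by (simp add: power2_norm_eq_inner[symmetric])
    have half: "\<phi> v - m * (w \<bullet> v) \<le> 0" for v
    proof (rule ccontr)
      assume "\<not> ?thesis"
      then have D: "\<phi> v - m * (w \<bullet> v) > 0" by simp
      define p where "p = \<phi> v"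
      define q where "q = w \<bullet> v"
      define D' where "D' = p - m * q"
      define t where "t = min (m / (\<bar>p\<bar> + 1)) (m * D' / (m\<^sup>2 * (norm v)\<^sup>2 + 1))"
      have Dp: "D' > 0" using D by (simp add: D'_def p_def q_def)
      have "m\<^sup>2 * (norm v)\<^sup>2 + 1 > 0" by (simp add: add_nonneg_pos)
      then have tpos: "t > 0" using mpos Dp by (simp add: t_def add_pos_nonneg)
      have t1: "t * \<bar>p\<bar> < m"
      proof -
        have "t * \<bar>p\<bar> \<le> m / (\<bar>p\<bar> + 1) * \<bar>p\<bar>" using tpos by (intro mult_right_mono) (auto simp: t_def)
        also have "\<dots> < m" using mpos by (simp add: field_simps)
        finally show ?thesis .
      qed
      have t2: "t * (m\<^sup>2 * (norm v)\<^sup>2) < m * D'"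
      proof -
        have "t * (m\<^sup>2 * (norm v)\<^sup>2) \<le> m * D' / (m\<^sup>2 * (norm v)\<^sup>2 + 1) * (m\<^sup>2 * (norm v)\<^sup>2)"
          using tpos by (intro mult_right_mono) (auto simp: t_def)
        also have "\<dots> < m * D'"
        proof -
          have kp: "m\<^sup>2 * (norm v)\<^sup>2 + 1 > 0" by (simp add: add_nonneg_pos)
          have "m * D' * (m\<^sup>2 * (norm v)\<^sup>2) < m * D' * (m\<^sup>2 * (norm v)\<^sup>2 + 1)" using mpos Dp by simp
          then have "m * D' * (m\<^sup>2 * (norm v)\<^sup>2) / (m\<^sup>2 * (norm v)\<^sup>2 + 1) < m * D'"
            using pos_divide_less_eq[OF kp] by blast
          then show ?thesis by simp
        qed
        finally show ?thesis .
      qed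
      have "t * (-p) \<le> t * \<bar>p\<bar>" by (rule mult_left_mono) (use tpos in auto)
      then have "-(t * \<bar>p\<bar>) \<le> t * p" by simp
      then have lhs0: "0 \<le> m + t * p" using t1 by linarith
      have "m + t * p = \<phi> (w + t *\<^sub>R v)" using pw by (simp add: add scale p_def)
      also have "\<dots> \<le> m * norm (w + t *\<^sub>R v)" by (rule le_m)
      finally have "(m + t * p)\<^sup>2 \<le> (m * norm (w + t *\<^sub>R v))\<^sup>2" using lhs0 by (intro power_mono) auto
      also have "\<dots> = m\<^sup>2 * (1 + 2 * t * q + t\<^sup>2 * (norm v)\<^sup>2)"
      proof -
          have "(norm (w + t *\<^sub>R v))\<^sup>2 = 1 + 2 * t * q + t\<^sup>2 * (norm v)\<^sup>2"
          proof -
            have "(norm (w + t *\<^sub>R v))\<^sup>2 = (w + t *\<^sub>R v) \<bullet> (w + t *\<^sub>R v)" by (rule power2_norm_eq_inner)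
            also have "\<dots> = w \<bullet> w + 2 * t * (w \<bullet> v) + t\<^sup>2 * (v \<bullet> v)"
              by (simp add: inner_add_left inner_add_right inner_commute power2_eq_square algebra_simps)
            also have "\<dots> = 1 + 2 * t * q + t\<^sup>2 * (norm v)\<^sup>2" by (simp add: ww q_def power2_norm_eq_inner)
            finally show ?thesis .
          qed
          then show ?thesis by (simp add: power_mult_distrib)
        qed
      finally have "2 * t * m * D' \<le> t\<^sup>2 * (m\<^sup>2 * (norm v)\<^sup>2) - t\<^sup>2 * p\<^sup>2"
        by (simp add: D'_def power2_eq_square algebra_simps)
      also have "\<dots> \<le> t * (t * (m\<^sup>2 * (norm v)\<^sup>2))" by (simp add: power2_eq_square)
      finally have "2 * m * D' \<le> t * (m\<^sup>2 * (norm v)\<^sup>2)" using tpos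
        by (simp add: mult.assoc)
      moreover have "2 * m * D' = 2 * (m * D')" by simp
      moreover have "m * D' > 0" using mpos Dp by simp
      ultimately show False using t2 by linarith
    qed
    have "\<phi> v = v \<bullet> (m *\<^sub>R w)" for v
      using half[of v] half[of "-v"] by (simp add: neg inner_commute)
    then show ?thesis by blast
  qed
qed


lemma adjoint_hilbert:
  fixes A :: "'a::{real_inner,complete_space} \<Rightarrow> 'b::real_inner"
  assumes bl: "bounded_linear A"
  shows "A x \<bullet> y = x \<bullet> adjoint A y"
proof -
  have "\<forall>y. \<exists>w. \<forall>x. A x \<bullet> y = x \<bullet> w"
  proof
    fix y
    have "bounded_linear (\<lambda>x. A x \<bullet> y)"
      using bounded_linear_compose[OF bounded_linear_inner_left bl] by simp
    then show "\<exists>w. \<forall>x. A x \<bullet> y = x \<bullet> w" by (rule riesz_aux)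
  qed
  then show ?thesis
    unfolding adjoint_def choice_iff
    by (intro someI2_ex[where Q="\<lambda>f'. A x \<bullet> y = x \<bullet> f' y"]) auto
qed

lemma adjoint_norm_le:
  fixes A :: "'a::{real_inner,complete_space} \<Rightarrow> 'b::real_inner"
  assumes bl: "bounded_linear A" and nA: "\<And>u. norm (A u) \<le> L * norm u" and L0: "L \<ge> 0"
  shows "norm (adjoint A y) \<le> L * norm y"
proof -
  define z where "z = adjoint A y"
  have "(norm z)\<^sup>2 = z \<bullet> z" by (simp add: power2_norm_eq_inner)
  also have "\<dots> = A z \<bullet> y" using adjoint_hilbert[OF bl, of z y] by (simp add: z_def)
  also have "\<dots> \<le> norm (A z) * norm y" by (rule Cauchy_Schwarz_ineq2[THEN order.trans[OF abs_ge_self]])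
  also have "\<dots> \<le> L * norm z * norm y" by (rule mult_right_mono[OF nA]) simp
  finally have h: "norm z * norm z \<le> (L * norm y) * norm z" by (simp add: power2_eq_square algebra_simps)
  show ?thesis
  proof (cases "norm z = 0")
    case True then show ?thesis using L0 by (simp add: z_def)
  next
    case False
    then have "norm z > 0" by simp
    then show ?thesis using h by (simp add: z_def mult_le_cancel_right)
  qed
qed

lemma quad_bound:
  fixes \<alpha> \<beta> t :: real
  assumes "\<alpha> > 0"
  shows "\<beta> * t - \<alpha> * t\<^sup>2 \<le> \<beta>\<^sup>2 / (4 * \<alpha>)"
proof -
  have "0 \<le> (2 * \<alpha> * t - \<beta>)\<^sup>2" by simp
  then have "4 * \<alpha> * (\<beta> * t - \<alpha> * t\<^sup>2) \<le> \<beta>\<^sup>2" by (simp add: power2_eq_square algebra_simps)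
  then show ?thesis using assms by (simp add: field_simps)
qed

lemma penalty_bound:
  fixes k LG E S a :: real
  assumes k0: "k \<ge> 0" and LG0: "LG \<ge> 0" and E0: "E \<ge> 0" and S0: "S \<ge> 0" and SE: "S \<le> LG * E + a"
  shows "2 * k * LG * E * S + 2 * k\<^sup>2 * LG\<^sup>2 * S\<^sup>2
     \<le> (2 * k * max 1 (LG\<^sup>2) * (3/2 + 2 * k * LG\<^sup>2)) * E\<^sup>2 + (2 * k * max 1 (LG\<^sup>2) * (3/2 + 2 * k * LG\<^sup>2)) * a\<^sup>2"
proof -
  define M where "M = max 1 (LG\<^sup>2)"
  have M1: "1 \<le> M" and HM: "LG\<^sup>2 \<le> M" by (auto simp: M_def)
  have LE0: "LG * E \<ge> 0" using LG0 E0 by simp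
  have h1: "LG * E * S \<le> LG * E * (LG * E + a)" by (rule mult_left_mono[OF SE LE0])
  have sq: "0 \<le> (LG * E - a)\<^sup>2" by simp
  have h2: "LG * E * a \<le> ((LG * E)\<^sup>2 + a\<^sup>2) / 2" using sq by (simp add: power2_eq_square algebra_simps)
  have h3: "S\<^sup>2 \<le> (LG * E + a)\<^sup>2" using S0 SE by (intro power_mono) auto
  have h4: "(LG * E + a)\<^sup>2 \<le> 2 * (LG * E)\<^sup>2 + 2 * a\<^sup>2" using sq by (simp add: power2_eq_square algebra_simps)
  have A: "LG * E * S \<le> 3/2 * (LG\<^sup>2 * E\<^sup>2) + 1/2 * a\<^sup>2"
    using h1 h2 by (simp add: power2_eq_square algebra_simps)
  have B: "S\<^sup>2 \<le> 2 * (LG\<^sup>2 * E\<^sup>2) + 2 * a\<^sup>2" using h3 h4 by (simp add: power_mult_distrib)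
  have k2: "2 * k * (LG * E * S) \<le> 2 * k * (3/2 * (LG\<^sup>2 * E\<^sup>2) + 1/2 * a\<^sup>2)"
    by (rule mult_left_mono[OF A]) (use k0 in simp)
  have kk: "0 \<le> 2 * k\<^sup>2 * LG\<^sup>2" by simp
  have k3: "2 * k\<^sup>2 * LG\<^sup>2 * S\<^sup>2 \<le> 2 * k\<^sup>2 * LG\<^sup>2 * (2 * (LG\<^sup>2 * E\<^sup>2) + 2 * a\<^sup>2)"
    by (rule mult_left_mono[OF B kk])
  have e1: "3 * k * (LG\<^sup>2 * E\<^sup>2) \<le> 3 * k * (M * E\<^sup>2)"
    using HM k0 by (intro mult_left_mono mult_right_mono) auto
  have e2: "k * a\<^sup>2 \<le> 3 * k * (M * a\<^sup>2)"
  proof -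
    have "1 * a\<^sup>2 \<le> (3 * M) * a\<^sup>2" by (rule mult_right_mono) (use M1 in auto)
    then have "k * (1 * a\<^sup>2) \<le> k * ((3 * M) * a\<^sup>2)" by (rule mult_left_mono) (use k0 in auto)
    then show ?thesis by (simp add: algebra_simps)
  qed
  have e3: "4 * k\<^sup>2 * LG\<^sup>2 * (LG\<^sup>2 * E\<^sup>2) \<le> 4 * k\<^sup>2 * LG\<^sup>2 * (M * E\<^sup>2)"
    using HM by (intro mult_left_mono mult_right_mono) auto
  have e4: "4 * k\<^sup>2 * LG\<^sup>2 * a\<^sup>2 \<le> 4 * k\<^sup>2 * LG\<^sup>2 * (M * a\<^sup>2)"
    using M1 by (intro mult_left_mono) (auto simp: mult_le_cancel_right1)
  have "2 * k * LG * E * S + 2 * k\<^sup>2 * LG\<^sup>2 * S\<^sup>2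
     \<le> 3 * k * (LG\<^sup>2 * E\<^sup>2) + k * a\<^sup>2 + (4 * k\<^sup>2 * LG\<^sup>2 * (LG\<^sup>2 * E\<^sup>2) + 4 * k\<^sup>2 * LG\<^sup>2 * a\<^sup>2)"
    using k2 k3 by (simp add: algebra_simps)
  also have "\<dots> \<le> 3 * k * (M * E\<^sup>2) + 3 * k * (M * a\<^sup>2) + (4 * k\<^sup>2 * LG\<^sup>2 * (M * E\<^sup>2) + 4 * k\<^sup>2 * LG\<^sup>2 * (M * a\<^sup>2))"
    using e1 e2 e3 e4 by linarith
  also have "\<dots> = (2 * k * M * (3/2 + 2 * k * LG\<^sup>2)) * E\<^sup>2 + (2 * k * M * (3/2 + 2 * k * LG\<^sup>2)) * a\<^sup>2"
    by (simp add: power2_eq_square algebra_simps)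
  finally show ?thesis by (simp add: M_def)
qed


lemma norm_diff_sq:
  fixes e v :: "'a::real_inner"
  shows "(norm (e - v))\<^sup>2 = (norm e)\<^sup>2 - 2 * (e \<bullet> v) + (norm v)\<^sup>2"
  by (simp add: power2_norm_eq_inner inner_diff_left inner_diff_right inner_commute)

lemma norm_add_sq_le:
  fixes u v :: "'a::real_inner"
  shows "(norm (u + v))\<^sup>2 \<le> 2 * (norm u)\<^sup>2 + 2 * (norm v)\<^sup>2"
proof -
  have "(norm (u + v))\<^sup>2 + (norm (u - v))\<^sup>2 = 2 * (norm u)\<^sup>2 + 2 * (norm v)\<^sup>2"
    by (simp add: power2_norm_eq_inner inner_diff_left inner_diff_right inner_add_left inner_add_right inner_commute)
  then show ?thesis using zero_le_power2[of "norm (u - v)"] by linarith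
qed

lemma one_step:
  fixes A Bo :: "'x::{real_inner,complete_space} \<Rightarrow> 'y::real_inner"
    and e :: 'x and r s \<nu> :: 'y
  assumes blA: "bounded_linear A" and blB: "bounded_linear Bo"
    and nA: "\<And>u. norm (A u) \<le> LF * norm u" and nB: "\<And>u. norm (Bo u) \<le> LG * norm u"
    and LF0: "LF \<ge> 0" and LG0: "LG \<ge> 0" and eta0: "\<eta> \<ge> 0" and lam0: "lm \<ge> 0" and etaF0: "\<eta>F \<ge> 0"
    and tc: "norm ((r + \<nu>) - A e) \<le> \<eta>F * norm (r + \<nu>)"
    and sS: "norm s \<le> LG * norm e + a"
    and c_def: "c = 2 * \<eta> * lm * max 1 (LG\<^sup>2) * (3/2 + 2 * \<eta> * lm * LG\<^sup>2)"
  shows "(norm (e - \<eta> *\<^sub>R (adjoint A r + lm *\<^sub>R adjoint Bo s)))\<^sup>2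
    \<le> (1 + c) * (norm e)\<^sup>2 + c * a\<^sup>2 - 2 * (1 - LF\<^sup>2 * \<eta> - \<eta>F) * \<eta> * (norm r)\<^sup>2
       + 2 * (1 + \<eta>F) * \<eta> * norm \<nu> * norm r"
proof -
  define u where "u = adjoint A r"
  define w where "w = adjoint Bo s"
  define E where "E = norm e"
  define R where "R = norm r"
  define N where "N = norm \<nu>"
  define S where "S = norm s"
  define X1 where "X1 = A e \<bullet> r"
  define X2 where "X2 = Bo e \<bullet> s"
  define X3 where "X3 = (norm (u + lm *\<^sub>R w))\<^sup>2"
  have E0: "E \<ge> 0" and R0: "R \<ge> 0" and N0: "N \<ge> 0" and S0: "S \<ge> 0" by (auto simp: E_def R_def N_def S_def)
  have eu: "e \<bullet> u = X1" unfolding u_def X1_def using adjoint_hilbert[OF blA, of e r] by simp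
  have ew: "e \<bullet> w = X2" unfolding w_def X2_def using adjoint_hilbert[OF blB, of e s] by simp
  have expand: "(norm (e - \<eta> *\<^sub>R (u + lm *\<^sub>R w)))\<^sup>2 = E\<^sup>2 - 2 * \<eta> * X1 - 2 * \<eta> * lm * X2 + \<eta>\<^sup>2 * X3"
  proof -
    have "(norm (e - \<eta> *\<^sub>R (u + lm *\<^sub>R w)))\<^sup>2 = E\<^sup>2 - 2 * (e \<bullet> (\<eta> *\<^sub>R (u + lm *\<^sub>R w))) + (norm (\<eta> *\<^sub>R (u + lm *\<^sub>R w)))\<^sup>2"
      by (simp add: norm_diff_sq E_def)
    also have "e \<bullet> (\<eta> *\<^sub>R (u + lm *\<^sub>R w)) = \<eta> * X1 + \<eta> * lm * X2"
      by (simp add: inner_add_right eu ew algebra_simps)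
    also have "(norm (\<eta> *\<^sub>R (u + lm *\<^sub>R w)))\<^sup>2 = \<eta>\<^sup>2 * X3"
      by (simp add: X3_def power_mult_distrib)
    finally show ?thesis by (simp add: algebra_simps)
  qed
  have nu: "norm u \<le> LF * R" unfolding u_def R_def by (rule adjoint_norm_le[OF blA nA LF0])
  have nw: "norm w \<le> LG * S" unfolding w_def S_def by (rule adjoint_norm_le[OF blB nB LG0])
  have X3b: "X3 \<le> 2 * (LF\<^sup>2 * R\<^sup>2) + 2 * (lm\<^sup>2 * (LG\<^sup>2 * S\<^sup>2))"
  proof -
    have "X3 \<le> 2 * (norm u)\<^sup>2 + 2 * (norm (lm *\<^sub>R w))\<^sup>2" unfolding X3_def by (rule norm_add_sq_le)
    also have "(norm u)\<^sup>2 \<le> (LF * R)\<^sup>2" using nu by (intro power_mono) auto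
    also have "(norm (lm *\<^sub>R w))\<^sup>2 = lm\<^sup>2 * (norm w)\<^sup>2" using lam0 by (simp add: power_mult_distrib)
    also have "(norm w)\<^sup>2 \<le> (LG * S)\<^sup>2" using nw by (intro power_mono) auto
    finally show ?thesis by (simp add: power_mult_distrib mult_left_mono)
  qed
  have X1b: "X1 \<ge> (1 - \<eta>F) * R\<^sup>2 - (1 + \<eta>F) * (N * R)"
  proof -
    have split: "X1 = (r + \<nu>) \<bullet> r - ((r + \<nu>) - A e) \<bullet> r" by (simp add: X1_def inner_diff_left)
    have a1: "(r + \<nu>) \<bullet> r \<ge> R\<^sup>2 - N * R"
    proof -
      have "(r + \<nu>) \<bullet> r = R\<^sup>2 + \<nu> \<bullet> r" by (simp add: inner_add_left R_def power2_norm_eq_inner)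
      moreover have "\<bar>\<nu> \<bullet> r\<bar> \<le> N * R" unfolding N_def R_def by (rule Cauchy_Schwarz_ineq2)
      ultimately show ?thesis by linarith
    qed
    have a2: "((r + \<nu>) - A e) \<bullet> r \<le> \<eta>F * (R + N) * R"
    proof -
      have "((r + \<nu>) - A e) \<bullet> r \<le> norm ((r + \<nu>) - A e) * R"
        unfolding R_def using Cauchy_Schwarz_ineq2[of "(r + \<nu>) - A e" r] by linarith
      also have "\<dots> \<le> \<eta>F * norm (r + \<nu>) * R" by (rule mult_right_mono[OF tc R0])
      also have "\<dots> \<le> \<eta>F * (R + N) * R"
        using etaF0 R0 norm_triangle_ineq[of r \<nu>] by (intro mult_right_mono mult_left_mono) (auto simp: R_def N_def)
      finally show ?thesis .
    qed
    have "X1 \<ge> R\<^sup>2 - N * R - \<eta>F * (R + N) * R" using split a1 a2 by linarith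
    moreover have "R\<^sup>2 - N * R - \<eta>F * (R + N) * R = (1 - \<eta>F) * R\<^sup>2 - (1 + \<eta>F) * (N * R)"
      by (simp add: power2_eq_square algebra_simps)
    ultimately show ?thesis by linarith
  qed
  have X2b: "X2 \<ge> - (LG * E * S)"
  proof -
    have "\<bar>X2\<bar> \<le> norm (Bo e) * S" unfolding X2_def S_def by (rule Cauchy_Schwarz_ineq2)
    also have "\<dots> \<le> LG * E * S" unfolding E_def by (rule mult_right_mono[OF nB S0])
    finally show ?thesis by linarith
  qed
  have SE: "S \<le> LG * E + a" using sS by (simp add: S_def E_def)
  have pen: "2 * (\<eta> * lm) * LG * E * S + 2 * (\<eta> * lm)\<^sup>2 * LG\<^sup>2 * S\<^sup>2 \<le> c * E\<^sup>2 + c * a\<^sup>2"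
    using penalty_bound[of "\<eta> * lm" LG E S a] eta0 lam0 LG0 E0 S0 SE by (simp add: c_def mult.assoc)
  define T1 where "T1 = -2 * \<eta> * ((1 - \<eta>F) * R\<^sup>2 - (1 + \<eta>F) * (N * R))"
  define T2 where "T2 = 2 * \<eta> * lm * (LG * E * S)"
  define T3 where "T3 = \<eta>\<^sup>2 * (2 * (LF\<^sup>2 * R\<^sup>2) + 2 * (lm\<^sup>2 * (LG\<^sup>2 * S\<^sup>2)))"
  have b1: "- (2 * \<eta> * X1) \<le> T1" unfolding T1_def using mult_left_mono[OF X1b, of "2 * \<eta>"] eta0 by simp
  have b2: "- (2 * \<eta> * lm * X2) \<le> T2" unfolding T2_def using mult_left_mono[OF X2b, of "2 * \<eta> * lm"] eta0 lam0 by simp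
  have b3: "\<eta>\<^sup>2 * X3 \<le> T3" unfolding T3_def by (rule mult_left_mono[OF X3b]) simp
  have ident: "T1 + T2 + T3 = (- 2 * (1 - LF\<^sup>2 * \<eta> - \<eta>F) * \<eta> * R\<^sup>2 + 2 * (1 + \<eta>F) * \<eta> * N * R)
      + (2 * (\<eta> * lm) * LG * E * S + 2 * (\<eta> * lm)\<^sup>2 * LG\<^sup>2 * S\<^sup>2)"
    unfolding T1_def T2_def T3_def by (simp add: power2_eq_square algebra_simps)
  have "(norm (e - \<eta> *\<^sub>R (adjoint A r + lm *\<^sub>R adjoint Bo s)))\<^sup>2 = E\<^sup>2 - 2 * \<eta> * X1 - 2 * \<eta> * lm * X2 + \<eta>\<^sup>2 * X3"
    using expand by (simp add: u_def w_def)
  also have "\<dots> \<le> E\<^sup>2 + T1 + T2 + T3" using b1 b2 b3 by linarith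
  also have "\<dots> \<le> E\<^sup>2 + (- 2 * (1 - LF\<^sup>2 * \<eta> - \<eta>F) * \<eta> * R\<^sup>2 + 2 * (1 + \<eta>F) * \<eta> * N * R) + (c * E\<^sup>2 + c * a\<^sup>2)"
    using ident pen by linarith
  also have "\<dots> = (1 + c) * (norm e)\<^sup>2 + c * a\<^sup>2 - 2 * (1 - LF\<^sup>2 * \<eta> - \<eta>F) * \<eta> * (norm r)\<^sup>2
       + 2 * (1 + \<eta>F) * \<eta> * norm \<nu> * norm r"
    by (simp add: E_def R_def N_def algebra_simps)
  finally show ?thesis .
qed

lemma sgd_local:
  "(\<forall>j<k. \<xi> j = \<xi>' j) \<Longrightarrow> sgd_iter F F' G G' y \<eta> lm x1 \<xi> k = sgd_iter F F' G G' y \<eta> lm x1 \<xi>' k"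
proof (induction k)
  case 0 then show ?case by simp
next
  case (Suc k)
  then have "sgd_iter F F' G G' y \<eta> lm x1 \<xi> k = sgd_iter F F' G G' y \<eta> lm x1 \<xi>' k" by simp
  moreover have "\<xi> k = \<xi>' k" using Suc.prems by simp
  ultimately show ?case by (simp add: Let_def)
qed

lemma stack_norm_nonneg: "stack_norm n z \<ge> 0"
proof -
  have "0 \<le> (1 / real n) * (\<Sum>i=1..n. (norm (z i))\<^sup>2)" by (intro mult_nonneg_nonneg sum_nonneg) auto
  then show ?thesis unfolding stack_norm_def by simp
qed

lemma stack_norm_sq: "n \<ge> 1 \<Longrightarrow> (stack_norm n z)\<^sup>2 = (\<Sum>i=1..n. (norm (z i))\<^sup>2) / real n"
proof -
  have "0 \<le> (\<Sum>i=1..n. (norm (z i))\<^sup>2) / real n" by (intro divide_nonneg_nonneg sum_nonneg) auto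
  then show ?thesis by (simp add: stack_norm_def)
qed

lemma stack_L2: "n \<ge> 1 \<Longrightarrow> stack_norm n z = L2_set (\<lambda>i. norm (z i)) {1..n} / sqrt (real n)"
  by (simp add: stack_norm_def L2_set_def real_sqrt_divide)

lemma norm_le_stack:
  assumes n: "n \<ge> 1" and i: "i \<in> {1..n}"
  shows "norm (z i) \<le> sqrt (real n) * stack_norm n z"
proof -
  have "sqrt (real n) * stack_norm n z = L2_set (\<lambda>i. norm (z i)) {1..n}"
    using n by (simp add: stack_L2)
  moreover have "norm (z i) \<le> L2_set (\<lambda>i. norm (z i)) {1..n}"
    using member_le_L2_set[of "{1..n}" i "\<lambda>i. norm (z i)"] i by simp
  ultimately show ?thesis by simp
qed

lemma set_index_law:
  assumes "n \<ge> 1" "\<xi> \<in> set_pmf (index_law n k)"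
  shows "\<xi> j \<in> {1..n}"
proof -
  have "set_pmf (index_law n k) = PiE_dflt {1..k} 1 (set_pmf \<circ> (\<lambda>_. pmf_of_set {1..n}))"
    unfolding index_law_def by (rule set_Pi_pmf) simp
  also have "\<dots> = PiE_dflt {1..k} 1 (\<lambda>_. {1..n})" using assms(1) by (simp add: o_def)
  finally have "\<xi> \<in> PiE_dflt {1..k} 1 (\<lambda>_. {1..n})" using assms(2) by simp
  then have "(j \<in> {1..k} \<longrightarrow> \<xi> j \<in> {1..n}) \<and> (j \<notin> {1..k} \<longrightarrow> \<xi> j = 1)"
    unfolding PiE_dflt_def by blast
  then show ?thesis using assms(1) by (cases "j \<in> {1..k}") auto
qed

lemma finite_index_law: "n \<ge> 1 \<Longrightarrow> finite (set_pmf (Pi_pmf {1..<k::nat} (1::nat) (\<lambda>_. pmf_of_set {1..n::nat})))"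
  by (subst set_Pi_pmf) (auto intro!: finite_PiE_dflt)

lemma finite_index_law': "n \<ge> 1 \<Longrightarrow> finite (set_pmf (index_law n k))"
  unfolding index_law_def by (subst set_Pi_pmf) (auto intro!: finite_PiE_dflt)

lemma pair_fubini_fin:
  fixes h :: "'a \<times> 'b \<Rightarrow> real"
  assumes fA: "finite (set_pmf A)" and fB: "finite (set_pmf B)"
  shows "measure_pmf.expectation (pair_pmf A B) h
       = measure_pmf.expectation B (\<lambda>b. measure_pmf.expectation A (\<lambda>a. h (a, b)))"
proof -
  have "measure_pmf.expectation (pair_pmf A B) h = (\<Sum>p\<in>set_pmf A \<times> set_pmf B. h p * pmf (pair_pmf A B) p)"
    by (rule integral_measure_pmf_real) (use fA fB in auto)
  also have "\<dots> = (\<Sum>(a, b)\<in>set_pmf A \<times> set_pmf B. h (a, b) * (pmf A a * pmf B b))"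
    by (intro sum.cong refl) (auto simp: pmf_pair)
  also have "\<dots> = (\<Sum>a\<in>set_pmf A. \<Sum>b\<in>set_pmf B. h (a, b) * (pmf A a * pmf B b))"
    by (rule sum.cartesian_product[symmetric])
  also have "\<dots> = (\<Sum>b\<in>set_pmf B. (\<Sum>a\<in>set_pmf A. h (a, b) * pmf A a) * pmf B b)"
    by (subst sum.swap) (simp add: sum_distrib_right mult.assoc)
  also have "\<dots> = (\<Sum>b\<in>set_pmf B. measure_pmf.expectation A (\<lambda>a. h (a, b)) * pmf B b)"
    by (intro sum.cong refl, subst integral_measure_pmf_real[of "set_pmf A"]) (use fA in auto)
  also have "\<dots> = measure_pmf.expectation B (\<lambda>b. measure_pmf.expectation A (\<lambda>a. h (a, b)))"
    by (rule integral_measure_pmf_real[symmetric]) (use fB in auto)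
  finally show ?thesis .
qed

lemma avg_index_law:
  fixes g :: "(nat \<Rightarrow> nat) \<Rightarrow> nat \<Rightarrow> real"
  assumes k: "k \<ge> 1" and n: "n \<ge> 1" and inv: "\<And>\<xi> y j. g (\<xi>(k := y)) j = g \<xi> j"
  shows "measure_pmf.expectation (index_law n k) (\<lambda>\<xi>. g \<xi> (\<xi> k))
       = measure_pmf.expectation (index_law n k) (\<lambda>\<xi>. (\<Sum>i=1..n. g \<xi> i) / real n)"
proof -
  define U where "U = pmf_of_set {1..n}"
  define P where "P = Pi_pmf {1..<k} (1::nat) (\<lambda>_. U)"
  have ins: "{1..k} = insert k {1..<k}" using k by auto
  have law: "index_law n k = map_pmf (\<lambda>(y, f). f(k := y)) (pair_pmf U P)"
    unfolding index_law_def P_def U_def ins by (rule Pi_pmf_insert) auto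
  have fU: "finite (set_pmf U)" using n by (simp add: U_def)
  have fP: "finite (set_pmf P)" using finite_index_law[OF n, of k] by (simp add: P_def U_def)
  have EU: "measure_pmf.expectation U f = (\<Sum>i=1..n. f i) / real n" for f :: "nat \<Rightarrow> real"
    using n unfolding U_def by (subst integral_pmf_of_set) auto
  have "measure_pmf.expectation (index_law n k) (\<lambda>\<xi>. g \<xi> (\<xi> k))
      = measure_pmf.expectation (pair_pmf U P) (\<lambda>p. g (snd p) (fst p))"
    unfolding law by (simp add: case_prod_unfold inv)
  also have "\<dots> = measure_pmf.expectation P (\<lambda>f. measure_pmf.expectation U (\<lambda>y. g f y))"
    by (subst pair_fubini_fin[OF fU fP]) simp
  also have "\<dots> = measure_pmf.expectation P (\<lambda>f. (\<Sum>i=1..n. g f i) / real n)"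
    by (simp add: EU)
  also have "\<dots> = measure_pmf.expectation (pair_pmf U P) (\<lambda>p. (\<Sum>i=1..n. g (snd p) i) / real n)"
    by (rule expectation_pair_pmf_snd[symmetric])
  also have "\<dots> = measure_pmf.expectation (index_law n k) (\<lambda>\<xi>. (\<Sum>i=1..n. g \<xi> i) / real n)"
    unfolding law by (simp add: case_prod_unfold inv)
  finally show ?thesis .
qed

lemma pmf_jensen_sq:
  fixes f :: "'a \<Rightarrow> real"
  assumes "finite (set_pmf M)"
  shows "(measure_pmf.expectation M f)\<^sup>2 \<le> measure_pmf.expectation M (\<lambda>x. (f x)\<^sup>2)"
proof -
  have "integrable M f" "integrable M (\<lambda>x. (f x)\<^sup>2)" using assms by (auto intro: integrable_measure_pmf_finite)
  then have "measure_pmf.variance M f = measure_pmf.expectation M (\<lambda>x. (f x)\<^sup>2) - (measure_pmf.expectation M f)\<^sup>2"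
    by (rule measure_pmf.variance_eq)
  moreover have "0 \<le> measure_pmf.variance M f" by (rule measure_pmf.variance_positive)
  ultimately show ?thesis by linarith
qed

theorem proposition3p1:
  fixes F G :: "nat \<Rightarrow> 'x::{real_inner,complete_space} \<Rightarrow> 'y::{real_inner,complete_space}"
    and F' G' :: "nat \<Rightarrow> 'x \<Rightarrow> ('x \<Rightarrow>\<^sub>L 'y)"
    and D :: "nat \<Rightarrow> 'x set"
    and ydag ydel :: "nat \<Rightarrow> 'y"
    and x1 xdag :: 'x
    and n :: nat
    and \<delta> \<rho> L_F L_G \<eta>_F C_min C_max :: real
    and \<eta> lam :: "nat \<Rightarrow> real"
    and k :: nat
  defines "B \<equiv> cball xdag \<rho>"
    and "x \<equiv> sgd_iter F F' G G' ydel \<eta> lam x1"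
    and "c \<equiv> 2 * \<eta> k * lam k * max 1 (L_G\<^sup>2) * (3/2 + 2 * \<eta> k * lam k * L_G\<^sup>2)"
    and "d \<equiv> (1 + \<eta>_F)\<^sup>2 / (2 * (1 - L_F\<^sup>2 * \<eta> k - \<eta>_F)) * \<eta> k"
  assumes n_pos: "n \<ge> 1"
    and noise: "stack_norm n (\<lambda>i. ydel i - ydag i) \<le> \<delta>"
    and xdag_dom: "xdag \<in> (\<Inter>i\<in>{1..n}. D i)"
    and xdag_sol: "\<forall>i\<in>{1..n}. F i xdag = ydag i"
    and xdag_min: "\<forall>z\<in>(\<Inter>i\<in>{1..n}. D i). (\<forall>i\<in>{1..n}. F i z = ydag i) \<longrightarrow> dist x1 xdag \<le> dist x1 z"
    and ball_dom: "B \<subseteq> (\<Inter>i\<in>{1..n}. D i)"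
    and rho: "\<rho> \<ge> norm (x1 - xdag)"
    and F_deriv: "\<forall>i\<in>{1..n}. \<forall>z\<in>B. (F i has_derivative blinfun_apply (F' i z)) (at z within B)"
    and G_deriv: "\<forall>i\<in>{1..n}. \<forall>z\<in>B. (G i has_derivative blinfun_apply (G' i z)) (at z within B)"
    and F'_cont: "\<forall>i\<in>{1..n}. continuous_on B (F' i)"
    and G'_cont: "\<forall>i\<in>{1..n}. continuous_on B (G' i)"
    and F'_bound: "\<forall>i\<in>{1..n}. \<forall>z\<in>B. norm (F' i z) \<le> L_F"
    and G'_bound: "\<forall>i\<in>{1..n}. \<forall>z\<in>B. norm (G' i z) \<le> L_G"
    and etaF: "0 \<le> \<eta>_F" "\<eta>_F < 1"
    and tcc: "\<forall>i\<in>{1..n}. \<forall>z\<in>B. \<forall>w\<in>B.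
                norm (F i z - F i w - blinfun_apply (F' i w) (z - w)) \<le> \<eta>_F * norm (F i z - F i w)"
    and C_pos: "0 < C_min" "C_min \<le> C_max"
    and C_bounds: "\<forall>z\<in>B. (\<forall>i\<in>{1..n}. F i z = ydag i) \<longrightarrow>
                    C_min \<le> stack_norm n (\<lambda>i. G i z - ydag i) \<and>
                    stack_norm n (\<lambda>i. G i z - ydag i) \<le> C_max"
    and eta_pos: "\<forall>j\<ge>1. \<eta> j > 0"
    and lam_pos: "\<forall>j\<ge>1. lam j > 0"
    and step_P: "\<forall>j\<ge>1. L_F\<^sup>2 * \<eta> j < 1"
    and eta_div: "\<not> summable (\<lambda>j. \<eta> (Suc j))"
    and eta_lam_sum: "summable (\<lambda>j. \<eta> (Suc j) * lam (Suc j))"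
    and step_strong: "\<forall>j\<ge>1. L_F\<^sup>2 * \<eta> j < 1 - \<eta>_F"
    and k_pos: "k \<ge> 1"
  shows
    "(\<forall>\<xi>. (\<forall>j. \<xi> j \<in> {1..n}) \<longrightarrow> x \<xi> k \<in> B \<longrightarrow>
        (norm (x \<xi> (k + 1) - xdag))\<^sup>2
          \<le> (1 + real n * c) * (norm (x \<xi> k - xdag))\<^sup>2 + real n * c * (C_max + \<delta>)\<^sup>2 + real n * d * \<delta>\<^sup>2)
     \<and>
     ((\<forall>\<xi>\<in>set_pmf (index_law n k). x \<xi> k \<in> B) \<longrightarrow>
       (let E = measure_pmf.expectation (index_law n k);
            ek1 = E (\<lambda>\<xi>. (norm (x \<xi> (k + 1) - xdag))\<^sup>2);
            ek = E (\<lambda>\<xi>. (norm (x \<xi> k - xdag))\<^sup>2);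
            res = E (\<lambda>\<xi>. (stack_norm n (\<lambda>i. F i (x \<xi> k) - ydel i))\<^sup>2);
            mid = (1 + c) * ek + c * (C_max + \<delta>)\<^sup>2
                  + 2 * (1 + \<eta>_F) * \<eta> k * \<delta> * sqrt res
                  - 2 * (1 - L_F\<^sup>2 * \<eta> k - \<eta>_F) * \<eta> k * res
        in ek1 \<le> mid \<and> mid \<le> (1 + c) * ek + c * (C_max + \<delta>)\<^sup>2 + d * \<delta>\<^sup>2))"
proof -
  have n1: "1 \<in> {1..n}" using n_pos by simp
  have nreal: "real n \<ge> 1" using n_pos by simp
  have rho0: "0 \<le> \<rho>" using rho norm_ge_zero[of "x1 - xdag"] by linarith
  have xdB: "xdag \<in> B" using rho0 by (simp add: B_def)
  have LG0: "L_G \<ge> 0" using G'_bound n1 xdB norm_ge_zero order_trans by blast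
  have LF0: "L_F \<ge> 0" using F'_bound n1 xdB norm_ge_zero order_trans by blast
  have del0: "\<delta> \<ge> 0" using noise stack_norm_nonneg order_trans by blast
  have etak: "\<eta> k > 0" using eta_pos k_pos by simp
  have lamk: "lam k > 0" using lam_pos k_pos by simp
  have "L_F\<^sup>2 * \<eta> k < 1 - \<eta>_F" using step_strong k_pos by blast
  then have alph: "1 - L_F\<^sup>2 * \<eta> k - \<eta>_F > 0" by linarith
  have c0: "c \<ge> 0" unfolding c_def
    by (intro mult_nonneg_nonneg add_nonneg_nonneg) (use etak lamk in auto)
  have d0: "d \<ge> 0" unfolding d_def using alph etak by simp
  have Cmax0: "C_max \<ge> 0" using C_pos by simp
  have convB: "convex B" by (simp add: B_def)
  define aa where "aa i = norm (G i xdag - ydag i) + norm (ydel i - ydag i)" for i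
  define \<alpha> where "\<alpha> = 2 * (1 - L_F\<^sup>2 * \<eta> k - \<eta>_F) * \<eta> k"
  define \<beta> where "\<beta> = 2 * (1 + \<eta>_F) * \<eta> k"
  have alpha_pos: "\<alpha> > 0" unfolding \<alpha>_def using alph etak by simp
  have beta0: "\<beta> \<ge> 0" unfolding \<beta>_def using etaF etak by simp
  define \<Phi> where "\<Phi> z i = (1 + c) * (norm (z - xdag))\<^sup>2 + c * (aa i)\<^sup>2 - \<alpha> * (norm (F i z - ydel i))\<^sup>2
      + \<beta> * norm (ydel i - ydag i) * norm (F i z - ydel i)" for z i
  have step: "(norm (z - \<eta> k *\<^sub>R (adjoint (blinfun_apply (F' i z)) (F i z - ydel i)
       + lam k *\<^sub>R adjoint (blinfun_apply (G' i z)) (G i z - ydel i)) - xdag))\<^sup>2 \<le> \<Phi> z i"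
    if z: "z \<in> B" and i: "i \<in> {1..n}" for z i
  proof -
    let ?A = "blinfun_apply (F' i z)"
    let ?Bo = "blinfun_apply (G' i z)"
    have nA: "norm (?A u) \<le> L_F * norm u" for u
      using norm_blinfun[of "F' i z" u] mult_right_mono[OF bspec[OF bspec[OF F'_bound i] z], of "norm u"]
      by simp
    have nB: "norm (?Bo u) \<le> L_G * norm u" for u
      using norm_blinfun[of "G' i z" u] mult_right_mono[OF bspec[OF bspec[OF G'_bound i] z], of "norm u"]
      by simp
    have Fx: "F i xdag = ydag i" using xdag_sol i by simp
    have tc0: "norm (F i xdag - F i z - ?A (xdag - z)) \<le> \<eta>_F * norm (F i xdag - F i z)"
      using tcc i xdB z by blast
    have eq1: "((F i z - ydel i) + (ydel i - ydag i)) - ?A (z - xdag) = - (F i xdag - F i z - ?A (xdag - z))"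
      using Fx by (simp add: blinfun.diff_right algebra_simps)
    have tc: "norm (((F i z - ydel i) + (ydel i - ydag i)) - ?A (z - xdag))
        \<le> \<eta>_F * norm ((F i z - ydel i) + (ydel i - ydag i))"
      using tc0 unfolding eq1 using Fx by (simp add: norm_minus_commute)
    have Gb: "norm (G i z - G i xdag) \<le> L_G * norm (z - xdag)"
    proof (rule differentiable_bound[OF convB _ _ z xdB])
      show "(G i has_derivative blinfun_apply (G' i w)) (at w within B)" if "w \<in> B" for w
        using G_deriv i that by blast
      show "onorm (blinfun_apply (G' i w)) \<le> L_G" if "w \<in> B" for w
        using G'_bound i that by (simp add: norm_blinfun.rep_eq[symmetric])
    qed
    have sS: "norm (G i z - ydel i) \<le> L_G * norm (z - xdag) + aa i"
    proof -
      have eq: "G i z - ydel i = (G i z - G i xdag) + (G i xdag - ydag i) - (ydel i - ydag i)" by simp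
      have "norm ((G i z - G i xdag) + (G i xdag - ydag i) - (ydel i - ydag i))
          \<le> norm ((G i z - G i xdag) + (G i xdag - ydag i)) + norm (ydel i - ydag i)" by (rule norm_triangle_ineq4)
      also have "\<dots> \<le> norm (G i z - G i xdag) + norm (G i xdag - ydag i) + norm (ydel i - ydag i)"
        by (intro add_right_mono norm_triangle_ineq)
      finally have "norm (G i z - ydel i) \<le> norm (G i z - G i xdag) + norm (G i xdag - ydag i) + norm (ydel i - ydag i)"
        unfolding eq[symmetric] .
      then show ?thesis using Gb by (simp add: aa_def)
    qed
    have "(norm ((z - xdag) - \<eta> k *\<^sub>R (adjoint ?A (F i z - ydel i) + lam k *\<^sub>R adjoint ?Bo (G i z - ydel i))))\<^sup>2
      \<le> (1 + c) * (norm (z - xdag))\<^sup>2 + c * (aa i)\<^sup>2 - 2 * (1 - L_F\<^sup>2 * \<eta> k - \<eta>_F) * \<eta> k * (norm (F i z - ydel i))\<^sup>2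
       + 2 * (1 + \<eta>_F) * \<eta> k * norm (ydel i - ydag i) * norm (F i z - ydel i)"
      by (rule one_step[OF blinfun.bounded_linear_right blinfun.bounded_linear_right nA nB LF0 LG0
            less_imp_le[OF etak] less_imp_le[OF lamk] etaF(1) tc sS meta_eq_to_obj_eq[OF c_def]])
    moreover have "(z - xdag) - \<eta> k *\<^sub>R (adjoint ?A (F i z - ydel i) + lam k *\<^sub>R adjoint ?Bo (G i z - ydel i))
      = z - \<eta> k *\<^sub>R (adjoint ?A (F i z - ydel i) + lam k *\<^sub>R adjoint ?Bo (G i z - ydel i)) - xdag"
      by (simp add: algebra_simps)
    ultimately show ?thesis by (simp add: \<Phi>_def \<alpha>_def \<beta>_def)
  qed
  have xs: "x \<xi> (k + 1) = x \<xi> k - \<eta> k *\<^sub>R (adjoint (blinfun_apply (F' (\<xi> k) (x \<xi> k))) (F (\<xi> k) (x \<xi> k) - ydel (\<xi> k))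
       + lam k *\<^sub>R adjoint (blinfun_apply (G' (\<xi> k) (x \<xi> k))) (G (\<xi> k) (x \<xi> k) - ydel (\<xi> k)))" for \<xi>
    using k_pos by (simp add: x_def Let_def)
  have onestep: "(norm (x \<xi> (k + 1) - xdag))\<^sup>2 \<le> \<Phi> (x \<xi> k) (\<xi> k)"
    if "\<xi> k \<in> {1..n}" "x \<xi> k \<in> B" for \<xi>
    unfolding xs using step[OF that(2) that(1)] .
  have stackG: "stack_norm n (\<lambda>i. G i xdag - ydag i) \<le> C_max" using C_bounds xdB xdag_sol by blast
  have sqn: "(sqrt (real n))\<^sup>2 = real n" by simp
  have aa0: "aa i \<ge> 0" for i by (simp add: aa_def)
  have aa_le: "aa i \<le> sqrt (real n) * (C_max + \<delta>)" if i: "i \<in> {1..n}" for i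
  proof -
    have "norm (G i xdag - ydag i) \<le> sqrt (real n) * C_max"
      using norm_le_stack[OF n_pos i, of "\<lambda>i. G i xdag - ydag i"] stackG
      by (smt (verit) mult_left_mono real_sqrt_ge_zero of_nat_0_le_iff)
    moreover have "norm (ydel i - ydag i) \<le> sqrt (real n) * \<delta>"
      using norm_le_stack[OF n_pos i, of "\<lambda>i. ydel i - ydag i"] noise
      by (smt (verit) mult_left_mono real_sqrt_ge_zero of_nat_0_le_iff)
    ultimately show ?thesis by (simp add: aa_def distrib_left)
  qed
  have nu_le: "norm (ydel i - ydag i) \<le> sqrt (real n) * \<delta>" if i: "i \<in> {1..n}" for i
    using norm_le_stack[OF n_pos i, of "\<lambda>i. ydel i - ydag i"] noise
    by (smt (verit) mult_left_mono real_sqrt_ge_zero of_nat_0_le_iff)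
  have quadN: "\<beta> * N * t - \<alpha> * t\<^sup>2 \<le> d * N\<^sup>2" for N t
  proof -
    have "\<beta> * N * t - \<alpha> * t\<^sup>2 \<le> (\<beta> * N)\<^sup>2 / (4 * \<alpha>)" by (rule quad_bound[OF alpha_pos])
    also have "(\<beta> * N)\<^sup>2 / (4 * \<alpha>) = d * N\<^sup>2"
    proof -
      define D where "D = 1 - L_F\<^sup>2 * \<eta> k - \<eta>_F"
      have Dp: "D > 0" using alph by (simp add: D_def)
      have dd: "d = (1 + \<eta>_F)\<^sup>2 / (2 * D) * \<eta> k" by (simp add: d_def D_def)
      have aa': "\<alpha> = 2 * D * \<eta> k" by (simp add: \<alpha>_def D_def)
      show ?thesis unfolding dd aa' \<beta>_def using Dp etak by (simp add: field_simps power2_eq_square)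
    qed
    finally show ?thesis .
  qed
  have part1: "\<Phi> z i \<le> (1 + real n * c) * (norm (z - xdag))\<^sup>2 + real n * c * (C_max + \<delta>)\<^sup>2 + real n * d * \<delta>\<^sup>2"
    if i: "i \<in> {1..n}" for z i
  proof -
    have a2: "(aa i)\<^sup>2 \<le> real n * (C_max + \<delta>)\<^sup>2"
    proof -
      have "(aa i)\<^sup>2 \<le> (sqrt (real n) * (C_max + \<delta>))\<^sup>2" using aa_le[OF i] aa0[of i] by (intro power_mono) auto
      then show ?thesis by (simp add: power_mult_distrib)
    qed
    have n2: "(norm (ydel i - ydag i))\<^sup>2 \<le> real n * \<delta>\<^sup>2"
    proof -
      have "(norm (ydel i - ydag i))\<^sup>2 \<le> (sqrt (real n) * \<delta>)\<^sup>2" using nu_le[OF i] by (intro power_mono) auto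
      then show ?thesis by (simp add: power_mult_distrib)
    qed
    have q: "\<beta> * norm (ydel i - ydag i) * norm (F i z - ydel i) - \<alpha> * (norm (F i z - ydel i))\<^sup>2
        \<le> d * (norm (ydel i - ydag i))\<^sup>2" by (rule quadN)
    have t1: "c * (norm (z - xdag))\<^sup>2 \<le> real n * c * (norm (z - xdag))\<^sup>2"
    proof -
      have "0 \<le> c * (norm (z - xdag))\<^sup>2" using c0 by simp
      then have "1 * (c * (norm (z - xdag))\<^sup>2) \<le> real n * (c * (norm (z - xdag))\<^sup>2)"
        by (rule mult_right_mono[OF nreal])
      then show ?thesis by (simp add: mult.assoc)
    qed
    have t2: "c * (aa i)\<^sup>2 \<le> real n * c * (C_max + \<delta>)\<^sup>2"
      using mult_left_mono[OF a2 c0] by (simp add: algebra_simps)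
    have t3: "d * (norm (ydel i - ydag i))\<^sup>2 \<le> real n * d * \<delta>\<^sup>2"
      using mult_left_mono[OF n2 d0] by (simp add: algebra_simps)
    show ?thesis unfolding \<Phi>_def using q t1 t2 t3 by (simp add: algebra_simps)
  qed
  have P1: "\<forall>\<xi>. (\<forall>j. \<xi> j \<in> {1..n}) \<longrightarrow> x \<xi> k \<in> B \<longrightarrow>
        (norm (x \<xi> (k + 1) - xdag))\<^sup>2
          \<le> (1 + real n * c) * (norm (x \<xi> k - xdag))\<^sup>2 + real n * c * (C_max + \<delta>)\<^sup>2 + real n * d * \<delta>\<^sup>2"
  proof (intro allI impI)
    fix \<xi> :: "nat \<Rightarrow> nat" assume h1: "\<forall>j. \<xi> j \<in> {1..n}" and h2: "x \<xi> k \<in> B"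
    have "\<xi> k \<in> {1..n}" using h1 by blast
    then show "(norm (x \<xi> (k + 1) - xdag))\<^sup>2
          \<le> (1 + real n * c) * (norm (x \<xi> k - xdag))\<^sup>2 + real n * c * (C_max + \<delta>)\<^sup>2 + real n * d * \<delta>\<^sup>2"
      using onestep[OF _ h2] part1 by (meson order_trans)
  qed
  have avgPhi: "(\<Sum>i=1..n. \<Phi> z i) / real n \<le> (1 + c) * (norm (z - xdag))\<^sup>2 + c * (C_max + \<delta>)\<^sup>2
      - \<alpha> * (stack_norm n (\<lambda>i. F i z - ydel i))\<^sup>2 + \<beta> * \<delta> * stack_norm n (\<lambda>i. F i z - ydel i)" for z
  proof -
    define Ni where "Ni = (\<lambda>i. norm (ydel i - ydag i))"
    define Ri where "Ri = (\<lambda>i. norm (F i z - ydel i))"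
    define Rz where "Rz = stack_norm n (\<lambda>i. F i z - ydel i)"
    define E2 where "E2 = (norm (z - xdag))\<^sup>2"
    have sqp: "sqrt (real n) > 0" using n_pos by simp
    have sumeq: "(\<Sum>i=1..n. \<Phi> z i) = real n * ((1 + c) * E2) + c * (\<Sum>i=1..n. (aa i)\<^sup>2)
        - \<alpha> * (\<Sum>i=1..n. (Ri i)\<^sup>2) + \<beta> * (\<Sum>i=1..n. Ni i * Ri i)"
      by (simp add: \<Phi>_def Ni_def Ri_def E2_def sum.distrib sum_subtractf sum_distrib_left mult.assoc)
    have L2G: "L2_set (\<lambda>i. norm (G i xdag - ydag i)) {1..n} = sqrt (real n) * stack_norm n (\<lambda>i. G i xdag - ydag i)"
      using sqp by (simp add: stack_L2[OF n_pos])
    have L2N: "L2_set Ni {1..n} = sqrt (real n) * stack_norm n (\<lambda>i. ydel i - ydag i)"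
      using sqp by (simp add: stack_L2[OF n_pos] Ni_def)
    have L2R: "L2_set Ri {1..n} = sqrt (real n) * Rz"
      using sqp by (simp add: stack_L2[OF n_pos] Ri_def Rz_def)
    have s1: "(\<Sum>i=1..n. (aa i)\<^sup>2) \<le> real n * (C_max + \<delta>)\<^sup>2"
    proof -
      have "L2_set aa {1..n} \<le> L2_set (\<lambda>i. norm (G i xdag - ydag i)) {1..n} + L2_set Ni {1..n}"
        unfolding aa_def Ni_def by (rule L2_set_triangle_ineq)
      also have "\<dots> \<le> sqrt (real n) * C_max + sqrt (real n) * \<delta>"
        unfolding L2G L2N using stackG noise sqp by (intro add_mono mult_left_mono) auto
      finally have L: "L2_set aa {1..n} \<le> sqrt (real n) * (C_max + \<delta>)" by (simp add: distrib_left)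
      have "(\<Sum>i=1..n. (aa i)\<^sup>2) = (L2_set aa {1..n})\<^sup>2"
        unfolding L2_set_def by (simp add: sum_nonneg)
      also have "\<dots> \<le> (sqrt (real n) * (C_max + \<delta>))\<^sup>2" using L by (intro power_mono) auto
      also have "\<dots> = real n * (C_max + \<delta>)\<^sup>2" by (simp add: power_mult_distrib)
      finally show ?thesis .
    qed
    have s2: "(\<Sum>i=1..n. (Ri i)\<^sup>2) = real n * Rz\<^sup>2"
      using stack_norm_sq[OF n_pos, of "\<lambda>i. F i z - ydel i"] n_pos by (simp add: Rz_def Ri_def)
    have s3: "(\<Sum>i=1..n. Ni i * Ri i) \<le> real n * (\<delta> * Rz)"
    proof -
      have "(\<Sum>i=1..n. Ni i * Ri i) = (\<Sum>i=1..n. \<bar>Ni i\<bar> * \<bar>Ri i\<bar>)" by (simp add: Ni_def Ri_def)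
      also have "\<dots> \<le> L2_set Ni {1..n} * L2_set Ri {1..n}" by (rule L2_set_mult_ineq)
      also have "\<dots> = real n * (stack_norm n (\<lambda>i. ydel i - ydag i) * Rz)"
        unfolding L2N L2R by (simp add: algebra_simps)
      also have "\<dots> \<le> real n * (\<delta> * Rz)"
        using noise by (intro mult_left_mono mult_right_mono) (auto simp: Rz_def stack_norm_nonneg)
      finally show ?thesis .
    qed
    have A1: "c * (\<Sum>i=1..n. (aa i)\<^sup>2) \<le> c * (real n * (C_max + \<delta>)\<^sup>2)" by (rule mult_left_mono[OF s1 c0])
    have A3: "\<beta> * (\<Sum>i=1..n. Ni i * Ri i) \<le> \<beta> * (real n * (\<delta> * Rz))" by (rule mult_left_mono[OF s3 beta0])
    have RHS: "real n * ((1 + c) * E2 + c * (C_max + \<delta>)\<^sup>2 - \<alpha> * Rz\<^sup>2 + \<beta> * \<delta> * Rz)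
        = real n * ((1 + c) * E2) + c * (real n * (C_max + \<delta>)\<^sup>2) - \<alpha> * (real n * Rz\<^sup>2) + \<beta> * (real n * (\<delta> * Rz))"
      by (simp add: algebra_simps)
    have "(\<Sum>i=1..n. \<Phi> z i) \<le> ((1 + c) * E2 + c * (C_max + \<delta>)\<^sup>2 - \<alpha> * Rz\<^sup>2 + \<beta> * \<delta> * Rz) * real n"
      using sumeq s2 A1 A3 RHS by (simp add: mult.commute)
    then have "(\<Sum>i=1..n. \<Phi> z i) / real n \<le> (1 + c) * E2 + c * (C_max + \<delta>)\<^sup>2 - \<alpha> * Rz\<^sup>2 + \<beta> * \<delta> * Rz"
      using n_pos by (simp add: pos_divide_le_eq)
    then show ?thesis by (simp add: E2_def Rz_def)
  qed
  have P2: "((\<forall>\<xi>\<in>set_pmf (index_law n k). x \<xi> k \<in> B) \<longrightarrow>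
       (let E = measure_pmf.expectation (index_law n k);
            ek1 = E (\<lambda>\<xi>. (norm (x \<xi> (k + 1) - xdag))\<^sup>2);
            ek = E (\<lambda>\<xi>. (norm (x \<xi> k - xdag))\<^sup>2);
            res = E (\<lambda>\<xi>. (stack_norm n (\<lambda>i. F i (x \<xi> k) - ydel i))\<^sup>2);
            mid = (1 + c) * ek + c * (C_max + \<delta>)\<^sup>2
                  + 2 * (1 + \<eta>_F) * \<eta> k * \<delta> * sqrt res
                  - 2 * (1 - L_F\<^sup>2 * \<eta> k - \<eta>_F) * \<eta> k * res
        in ek1 \<le> mid \<and> mid \<le> (1 + c) * ek + c * (C_max + \<delta>)\<^sup>2 + d * \<delta>\<^sup>2))"
  proof (intro impI)
    assume supp: "\<forall>\<xi>\<in>set_pmf (index_law n k). x \<xi> k \<in> B"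
    define M where "M = index_law n k"
    have finM: "finite (set_pmf M)" using finite_index_law'[OF n_pos] by (simp add: M_def)
    have intM: "integrable M f" for f :: "(nat \<Rightarrow> nat) \<Rightarrow> real" using finM by (rule integrable_measure_pmf_finite)
    have suppM: "x \<xi> k \<in> B \<and> \<xi> k \<in> {1..n}" if "\<xi> \<in> set_pmf M" for \<xi>
      using supp set_index_law[OF n_pos] that by (auto simp: M_def)
    define Rz where "Rz z = stack_norm n (\<lambda>i. F i z - ydel i)" for z
    define ek1 where "ek1 = measure_pmf.expectation M (\<lambda>\<xi>. (norm (x \<xi> (k + 1) - xdag))\<^sup>2)"
    define ek where "ek = measure_pmf.expectation M (\<lambda>\<xi>. (norm (x \<xi> k - xdag))\<^sup>2)"
    define res where "res = measure_pmf.expectation M (\<lambda>\<xi>. (Rz (x \<xi> k))\<^sup>2)"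
    define ER where "ER = measure_pmf.expectation M (\<lambda>\<xi>. Rz (x \<xi> k))"
    have ineq1: "ek1 \<le> measure_pmf.expectation M (\<lambda>\<xi>. \<Phi> (x \<xi> k) (\<xi> k))"
      unfolding ek1_def
    proof (rule integral_mono_AE[OF intM intM])
      show "AE \<xi> in M. (norm (x \<xi> (k + 1) - xdag))\<^sup>2 \<le> \<Phi> (x \<xi> k) (\<xi> k)"
        unfolding AE_measure_pmf_iff using suppM onestep by blast
    qed
    have inv: "\<Phi> (x (\<xi>(k := y)) k) j = \<Phi> (x \<xi> k) j" for \<xi> y j
    proof -
      have "x (\<xi>(k := y)) k = x \<xi> k" unfolding x_def by (rule sgd_local) simp
      then show ?thesis by simp
    qed
    have eq2: "measure_pmf.expectation M (\<lambda>\<xi>. \<Phi> (x \<xi> k) (\<xi> k))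
        = measure_pmf.expectation M (\<lambda>\<xi>. (\<Sum>i=1..n. \<Phi> (x \<xi> k) i) / real n)"
      unfolding M_def by (rule avg_index_law[where g="\<lambda>\<xi> i. \<Phi> (x \<xi> k) i", OF k_pos n_pos inv])
    have ineq3: "measure_pmf.expectation M (\<lambda>\<xi>. (\<Sum>i=1..n. \<Phi> (x \<xi> k) i) / real n)
        \<le> measure_pmf.expectation M (\<lambda>\<xi>. (1 + c) * (norm (x \<xi> k - xdag))\<^sup>2 + c * (C_max + \<delta>)\<^sup>2
             - \<alpha> * (Rz (x \<xi> k))\<^sup>2 + \<beta> * \<delta> * Rz (x \<xi> k))"
      by (intro integral_mono_AE[OF intM intM] AE_I2) (simp only: Rz_def, rule avgPhi)
    have cst: "measure_pmf.expectation M (\<lambda>_. a) = a" for a :: real by simp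
    have eq4: "measure_pmf.expectation M (\<lambda>\<xi>. (1 + c) * (norm (x \<xi> k - xdag))\<^sup>2 + c * (C_max + \<delta>)\<^sup>2
             - \<alpha> * (Rz (x \<xi> k))\<^sup>2 + \<beta> * \<delta> * Rz (x \<xi> k))
        = (1 + c) * ek + c * (C_max + \<delta>)\<^sup>2 - \<alpha> * res + \<beta> * \<delta> * ER"
      unfolding ek_def res_def ER_def by (simp add: intM cst)
    have res0: "res \<ge> 0" unfolding res_def by (intro integral_nonneg_AE AE_I2) simp
    have ER_le: "ER \<le> sqrt res"
    proof -
      have "ER\<^sup>2 \<le> res" unfolding ER_def res_def by (rule pmf_jensen_sq[OF finM])
      then have "sqrt (ER\<^sup>2) \<le> sqrt res" by (rule real_sqrt_le_mono)
      then show ?thesis by simp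
    qed
    have bd0: "\<beta> * \<delta> \<ge> 0" using beta0 del0 by simp
    have m1: "ek1 \<le> (1 + c) * ek + c * (C_max + \<delta>)\<^sup>2 + \<beta> * \<delta> * sqrt res - \<alpha> * res"
    proof -
      have "\<beta> * \<delta> * ER \<le> \<beta> * \<delta> * sqrt res" by (rule mult_left_mono[OF ER_le bd0])
      then show ?thesis using ineq1 eq2 ineq3 eq4 by linarith
    qed
    have m2: "(1 + c) * ek + c * (C_max + \<delta>)\<^sup>2 + \<beta> * \<delta> * sqrt res - \<alpha> * res
        \<le> (1 + c) * ek + c * (C_max + \<delta>)\<^sup>2 + d * \<delta>\<^sup>2"
    proof -
      have "\<beta> * \<delta> * sqrt res - \<alpha> * (sqrt res)\<^sup>2 \<le> d * \<delta>\<^sup>2" by (rule quadN)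
      then show ?thesis using res0 by simp
    qed
    note H = conjI[OF m1 m2]
    show "let E = measure_pmf.expectation (index_law n k);
            ek1 = E (\<lambda>\<xi>. (norm (x \<xi> (k + 1) - xdag))\<^sup>2);
            ek = E (\<lambda>\<xi>. (norm (x \<xi> k - xdag))\<^sup>2);
            res = E (\<lambda>\<xi>. (stack_norm n (\<lambda>i. F i (x \<xi> k) - ydel i))\<^sup>2);
            mid = (1 + c) * ek + c * (C_max + \<delta>)\<^sup>2
                  + 2 * (1 + \<eta>_F) * \<eta> k * \<delta> * sqrt res
                  - 2 * (1 - L_F\<^sup>2 * \<eta> k - \<eta>_F) * \<eta> k * res
        in ek1 \<le> mid \<and> mid \<le> (1 + c) * ek + c * (C_max + \<delta>)\<^sup>2 + d * \<delta>\<^sup>2"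
      using H unfolding Let_def ek1_def ek_def res_def M_def Rz_def \<alpha>_def \<beta>_def .
  qed
  show ?thesis using P1 P2 by blast
qed

end
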